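(* Let $\mu>0$ and let $\psi:(0,\infty)\times\mathbb T\to\mathbb R$ be such that $\psi_\beta$ exists and is $C^1$ on $(0,\infty)\times\mathbb T$, there are constants $0<m\le M$ with $-M\beta^{-2\mu}\le\psi_\beta(\beta,\phi)\le-m\beta^{-2\mu}$ for all $(\beta,\phi)$, and $\psi_{\beta\varphi}:=(\partial_\phi-\partial_\beta)\psi_\beta<0$ everywhere. Define $A(\beta,\phi)=(a(\beta,\phi),\beta+\phi)\in\mathbb R\times\mathbb T$ with $a=\frac12\log(-\psi_\beta/\mu)$, and $B(a,\theta)=(e^a\cos\theta,e^a\sin\theta)$. Then $T=B\circ A$ is a $C^1$-diffeomorphism from $(0,\infty)\times\mathbb T$ onto $\mathbb R^2\setminus\{0\}$.
   Context: $\mathbb T=\mathbb R/2\pi\mathbb Z$. *)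

theory Defs
  imports "HOL-Analysis.Analysis"
begin

definition C1_on :: "'a::real_normed_vector set \<Rightarrow> ('a \<Rightarrow> 'b::real_normed_vector) \<Rightarrow> bool" where
  "C1_on S f \<longleftrightarrow> (\<exists>f'. (\<forall>x\<in>S. (f has_derivative blinfun_apply (f' x)) (at x)) \<and> continuous_on S f')"

text \<open>The map T = B o A, with phi lifted from the circle R/2piZ to R.\<close>
definition Tmap :: "real \<Rightarrow> (real \<Rightarrow> real \<Rightarrow> real) \<Rightarrow> real \<times> real \<Rightarrow> real \<times> real" where
  "Tmap \<mu> psib = (\<lambda>(b, p). let a = ln (- psib b p / \<mu>) / 2
      in (exp a * cos (b + p), exp a * sin (b + p)))"

end

theory Submission imports Defs begin


definition mk2 :: "real \<times> real \<Rightarrow> real \<times> real \<Rightarrow> (real \<times> real) \<Rightarrow>\<^sub>L (real \<times> real)" where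
  "mk2 u v = Blinfun (\<lambda>h. fst h *\<^sub>R u + snd h *\<^sub>R v)"

lemma bl_mk2: "bounded_linear (\<lambda>h::real\<times>real. fst h *\<^sub>R u + snd h *\<^sub>R (v::real\<times>real))"
  by (intro bounded_linear_intros)

lemma mk2_apply [simp]: "blinfun_apply (mk2 u v) h = fst h *\<^sub>R u + snd h *\<^sub>R v"
  unfolding mk2_def by (simp add: bounded_linear_Blinfun_apply[OF bl_mk2])

lemma Basis_pair2: "(Basis :: (real \<times> real) set) = {(1,0),(0,1)}"
  by (auto simp: Basis_prod_def)

lemma continuous_on_mk2:
  fixes S :: "'a::t2_space set"
  assumes "continuous_on S u" "continuous_on S v"
  shows "continuous_on S (\<lambda>x. mk2 (u x) (v x))"
  apply (rule continuous_on_blinfun_componentwise)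
  using assms by (auto simp: Basis_pair2)

definition det2 :: "real \<times> real \<Rightarrow> real \<times> real \<Rightarrow> real" where
  "det2 u v = fst u * snd v - snd u * fst v"

definition inv2 :: "real \<times> real \<Rightarrow> real \<times> real \<Rightarrow> (real \<times> real) \<Rightarrow>\<^sub>L (real \<times> real)" where
  "inv2 u v = mk2 (snd v / det2 u v, - snd u / det2 u v) (- fst v / det2 u v, fst u / det2 u v)"

lemma inv2_left': "det2 u v \<noteq> 0 \<Longrightarrow> blinfun_apply (inv2 u v) (blinfun_apply (mk2 u v) y) = y"
  apply (cases u; cases v; cases y)
  apply (simp add: inv2_def det2_def)
  apply (intro conjI)
   apply (simp_all add: divide_simps)
   apply (simp_all add: algebra_simps)
  done

lemma inv2_right: "det2 u v \<noteq> 0 \<Longrightarrow> blinfun_apply (mk2 u v) (blinfun_apply (inv2 u v) y) = y"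
  apply (cases u; cases v; cases y)
  apply (simp add: inv2_def det2_def)
  apply (intro conjI)
   apply (simp_all add: divide_simps)
   apply (simp_all add: algebra_simps)
  done

lemma inv2_left: "det2 u v \<noteq> 0 \<Longrightarrow> inv2 u v o\<^sub>L mk2 u v = id_blinfun"
  apply (rule blinfun_eqI)
  using inv2_left'[of u v] by (metis blinfun_apply_id_blinfun mk2_apply blinfun_apply_blinfun_compose)


lemma inv_mk2: "det2 u v \<noteq> 0 \<Longrightarrow> inv (blinfun_apply (mk2 u v)) = blinfun_apply (inv2 u v)"
  apply (rule ext)
  by (metis inv2_right inv2_left' inv_f_f injI)

lemma continuous_on_inv2:
  fixes S :: "'a::t2_space set"
  assumes "continuous_on S u" "continuous_on S v" "\<And>x. x \<in> S \<Longrightarrow> det2 (u x) (v x) \<noteq> 0"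
  shows "continuous_on S (\<lambda>x. inv2 (u x) (v x))"
  unfolding inv2_def det2_def
  using assms unfolding det2_def
  by (intro continuous_on_mk2 continuous_intros) auto



lemma exp_ln_half: "q > 0 \<Longrightarrow> exp (ln q / 2) = sqrt (q::real)"
  by (simp add: powr_half_sqrt[symmetric] powr_def)

lemma blin_real2: "blinfun_apply (L :: (real\<times>real) \<Rightarrow>\<^sub>L real) h = fst h * L (1,0) + snd h * L (0,1)"
proof -
  have "h = fst h *\<^sub>R (1,0) + snd h *\<^sub>R (0,1)" by (simp add: prod_eq_iff)
  then have "L h = L (fst h *\<^sub>R (1,0) + snd h *\<^sub>R (0,1))" by simp
  also have "\<dots> = fst h * L (1,0) + snd h * L (0,1)"
    by (simp only: blinfun.add_right blinfun.scaleR_right) simp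
  finally show ?thesis .
qed

lemma der_T:
  assumes F: "((F::real\<times>real\<Rightarrow>real) has_derivative F') (at x)" and "F x < 0" "(\<mu>::real) > 0"
  shows "((\<lambda>x. (sqrt (- F x / \<mu>) * cos (fst x + snd x), sqrt (- F x / \<mu>) * sin (fst x + snd x))) has_derivative (\<lambda>h. 
    ((- F' h / \<mu>) / (2 * sqrt (- F x / \<mu>)) * cos (fst x + snd x) - sqrt (- F x / \<mu>) * sin (fst x + snd x) * (fst h + snd h),
     (- F' h / \<mu>) / (2 * sqrt (- F x / \<mu>)) * sin (fst x + snd x) + sqrt (- F x / \<mu>) * cos (fst x + snd x) * (fst h + snd h)))) (at x)"
proof -
  have q: "((\<lambda>x. - F x / \<mu>) has_derivative (\<lambda>h. - F' h / \<mu>)) (at x)"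
    using F assms(3) by (auto intro!: derivative_eq_intros)
  have pos: "- F x / \<mu> > 0" using assms by (simp add: divide_neg_pos)
  have s: "((\<lambda>x. sqrt (- F x / \<mu>)) has_derivative (\<lambda>h. (- F' h / \<mu>) / (2 * sqrt (- F x / \<mu>)))) (at x)"
    apply (rule has_derivative_eq_rhs[OF has_derivative_real_sqrt[where g="\<lambda>x. - F x / \<mu>", OF pos q]])
    by (auto simp: divide_simps)
  have th: "((\<lambda>x. fst x + snd x) has_derivative (\<lambda>h. fst h + snd h)) (at x)"
    by (auto intro!: derivative_eq_intros)
  show ?thesis
    apply (rule has_derivative_eq_rhs)
    apply (rule has_derivative_Pair)
    apply (rule has_derivative_mult[OF s has_derivative_cos[OF th]])
    apply (rule has_derivative_mult[OF s has_derivative_sin[OF th]])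
    apply (auto simp: algebra_simps)
    done
qed

lemma line_mono:
  fixes F :: "real \<times> real \<Rightarrow> real" and t1 t2 th :: real
  assumes der: "\<And>x. x \<in> {0<..} \<times> UNIV \<Longrightarrow> (F has_derivative blinfun_apply (F' x)) (at x)"
    and pos: "\<And>x. x \<in> {0<..} \<times> UNIV \<Longrightarrow> F' x (1,0) - F' x (0,1) > 0"
    and t: "0 < t1" "t1 < t2"
  shows "F (t1, th - t1) < F (t2, th - t2)"
proof -
  have dd: "DERIV (\<lambda>t. F (t, th - t)) t :> (F' (t, th - t) (1,0) - F' (t, th - t) (0,1))" if "t > 0" for t
  proof -
    have l: "((\<lambda>t::real. (t, th - t)) has_derivative (\<lambda>h. (h, - h))) (at t)"
      by (auto intro!: derivative_eq_intros)
    have d: "((\<lambda>t. F (t, th - t)) has_derivative (\<lambda>h. F' (t, th - t) (h, -h))) (at t)"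
      using has_derivative_compose[OF l der[of "(t, th - t)"]] that by (simp add: o_def)
    have e: "(\<lambda>h. F' (t, th - t) (h, -h)) = (*) (F' (t, th - t) (1,0) - F' (t, th - t) (0,1))"
    proof
      fix h
      show "F' (t, th - t) (h, -h) = (F' (t, th - t) (1,0) - F' (t, th - t) (0,1)) * h"
        by (subst blin_real2) (simp add: algebra_simps)
    qed
    show ?thesis using d unfolding e has_field_derivative_def .
  qed
  show ?thesis
  proof (rule DERIV_pos_imp_increasing[OF t(2)])
    fix x assume "t1 \<le> x" "x \<le> t2"
    then have x0: "x > 0" using t by linarith
    show "\<exists>y. DERIV (\<lambda>t. F (t, th - t)) x :> y \<and> y > 0"
      using dd[OF x0] pos[of "(x, th - x)"] x0 by auto
  qed
qed

lemma det_alg0: "det2 (a1 * c - R * s, a1 * s + R * c) (a2 * c - R * s, a2 * s + R * (c::real)) = R * (a1 - a2) * (s * s + c * c)"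
  unfolding det2_def fst_conv snd_conv by (simp add: algebra_simps)

lemma det_alg: "det2 (a1 * cos t - R * sin t, a1 * sin t + R * cos t) (a2 * cos t - R * sin t, a2 * sin t + R * cos (t::real)) = R * (a1 - a2)"
proof -
  have h: "sin t * sin t + cos t * cos t = 1" using sin_cos_squared_add[of t] by (simp add: power2_eq_square)
  show ?thesis unfolding det_alg0 h by simp
qed



theorem proposition4p1:
  fixes \<mu> m M :: real and \<psi> psib :: "real \<Rightarrow> real \<Rightarrow> real"
  assumes mu_pos: "\<mu> > 0"
    and periodic: "\<And>b p. b > 0 \<Longrightarrow> \<psi> b (p + 2 * pi) = \<psi> b p"
    and psib_deriv: "\<And>b p. b > 0 \<Longrightarrow> ((\<lambda>t. \<psi> t p) has_real_derivative psib b p) (at b)"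
    and psib_C1: "C1_on ({0<..} \<times> UNIV) (\<lambda>(b, p). psib b p)"
    and mM: "0 < m" "m \<le> M"
    and bounds: "\<And>b p. b > 0 \<Longrightarrow>
         - M * b powr (- 2 * \<mu>) \<le> psib b p \<and> psib b p \<le> - m * b powr (- 2 * \<mu>)"
    and mixed_neg: "\<And>b p. b > 0 \<Longrightarrow>
         frechet_derivative (\<lambda>(b, p). psib b p) (at (b, p)) (-1, 1) < 0"
  shows "C1_on ({0<..} \<times> UNIV) (Tmap \<mu> psib)
    \<and> (\<forall>x\<in>{0<..} \<times> UNIV. \<forall>y\<in>{0<..} \<times> UNIV.
          Tmap \<mu> psib x = Tmap \<mu> psib y \<longleftrightarrow>
            fst x = fst y \<and> (\<exists>k::int. snd x - snd y = 2 * pi * of_int k))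
    \<and> Tmap \<mu> psib ` ({0<..} \<times> UNIV) = UNIV - {0}
    \<and> (\<forall>z. z \<noteq> 0 \<longrightarrow> (\<exists>U g. open U \<and> z \<in> U \<and> 0 \<notin> U \<and> C1_on U g
          \<and> g ` U \<subseteq> {0<..} \<times> UNIV \<and> (\<forall>w\<in>U. Tmap \<mu> psib (g w) = w)))"
proof -
  define S :: "(real \<times> real) set" where "S = {0<..} \<times> UNIV"
  have openS: "open S" unfolding S_def by (intro open_Times) auto
  define F :: "real \<times> real \<Rightarrow> real" where "F = (\<lambda>x. psib (fst x) (snd x))"
  have Feq: "(\<lambda>(b, p). psib b p) = F" by (auto simp: F_def)
  obtain F' where F'der: "\<And>x. x \<in> S \<Longrightarrow> (F has_derivative blinfun_apply (F' x)) (at x)"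
    and contF': "continuous_on S F'"
    using psib_C1 unfolding C1_on_def Feq S_def by blast
  have inS: "x \<in> S \<longleftrightarrow> fst x > 0" for x by (cases x) (auto simp: S_def)
  have neg: "F x < 0" if "x \<in> S" for x
  proof -
    have "fst x powr (- 2 * \<mu>) > 0" using that inS by simp
    then have "- m * fst x powr (- 2 * \<mu>) < 0" using mM by simp
    then show ?thesis using bounds[of "fst x" "snd x"] that inS by (simp add: F_def)
  qed
  have contF: "continuous_on S F"
    by (rule continuous_at_imp_continuous_on) (meson F'der has_derivative_continuous)
  have per1: "psib b (p + 2 * pi) = psib b p" if "b > 0" for b p
  proof -
    have "((\<lambda>t. \<psi> t p) has_real_derivative psib b (p + 2 * pi)) (at b)"
      by (rule has_field_derivative_transform_within_open[OF psib_deriv[of b "p + 2*pi"], where S="{0<..}"])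
         (use that periodic in auto)
    then show ?thesis using psib_deriv[OF that, of p] DERIV_unique by blast
  qed
  have pernat: "psib b (p + 2 * pi * real n) = psib b p" if "b > 0" for b p and n :: nat
  proof (induction n)
    case (Suc n)
    have "psib b (p + 2 * pi * real (Suc n)) = psib b ((p + 2 * pi * real n) + 2 * pi)"
      by (simp add: algebra_simps)
    also have "\<dots> = psib b (p + 2 * pi * real n)" by (rule per1[OF that])
    finally show ?case using Suc by simp
  qed simp
  have per: "psib b (p + 2 * pi * of_int k) = psib b p" if "b > 0" for b p and k :: int
  proof (cases "k \<ge> 0")
    case True
    then show ?thesis using pernat[OF that, of p "nat k"] by simp
  next
    case False
    have "psib b p = psib b ((p + 2 * pi * of_int k) + 2 * pi * real (nat (-k)))"
      using False by simp
    also have "\<dots> = psib b (p + 2 * pi * of_int k)" by (rule pernat[OF that])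
    finally show ?thesis by simp
  qed
  have mixed: "F' x (1,0) - F' x (0,1) > 0" if "x \<in> S" for x
  proof -
    have "frechet_derivative F (at x) = blinfun_apply (F' x)"
      using frechet_derivative_at[OF F'der[OF that]] by simp
    then have "F' x (-1, 1) < 0" using mixed_neg[of "fst x" "snd x"] that inS Feq by simp
    then show ?thesis by (subst (asm) blin_real2) simp
  qed
  define r where "r = (\<lambda>x. sqrt (- F x / \<mu>))"
  define th where "th = (\<lambda>x::real\<times>real. fst x + snd x)"
  have rpos: "r x > 0" if "x \<in> S" for x using neg[OF that] mu_pos by (simp add: r_def divide_neg_pos)
  have Teq: "Tmap \<mu> psib x = (r x * cos (th x), r x * sin (th x))" if "x \<in> S" for x
  proof -
    have "- F x / \<mu> > 0" using neg[OF that] mu_pos by (simp add: divide_neg_pos)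
    then show ?thesis
      by (cases x) (simp add: Tmap_def Let_def r_def th_def F_def exp_ln_half)
  qed
  define c1 where "c1 = (\<lambda>x. ((- F' x (1,0) / \<mu>) / (2 * r x) * cos (th x) - r x * sin (th x),
      (- F' x (1,0) / \<mu>) / (2 * r x) * sin (th x) + r x * cos (th x)))"
  define c2 where "c2 = (\<lambda>x. ((- F' x (0,1) / \<mu>) / (2 * r x) * cos (th x) - r x * sin (th x),
      (- F' x (0,1) / \<mu>) / (2 * r x) * sin (th x) + r x * cos (th x)))"
  define D where "D = (\<lambda>x. mk2 (c1 x) (c2 x))"
  have derT: "(Tmap \<mu> psib has_derivative blinfun_apply (D x)) (at x)" if "x \<in> S" for x
  proof -
    have "((\<lambda>x. (r x * cos (th x), r x * sin (th x))) has_derivative blinfun_apply (D x)) (at x)"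
      unfolding r_def th_def
      apply (rule has_derivative_eq_rhs[OF der_T[OF F'der[OF that] neg[OF that] mu_pos]])
      apply (rule ext)
      subgoal for h
        by (simp add: blin_real2[of "F' x" h] D_def c1_def c2_def r_def th_def prod_eq_iff algebra_simps add_divide_distrib diff_divide_distrib)
      done
    then show ?thesis
      by (rule has_derivative_transform_within_open[OF _ openS that]) (simp add: Teq)
  qed
  have contr: "continuous_on S r" unfolding r_def
    using contF mu_pos by (intro continuous_intros) auto
  have contth: "continuous_on S th" unfolding th_def by (intro continuous_intros)
  have contF'1: "continuous_on S (\<lambda>x. F' x v)" for v
    by (intro blinfun.continuous_on[OF contF'] continuous_intros)
  have contc1: "continuous_on S c1" unfolding c1_def
    using contr contth contF'1 contF' mu_pos by (intro continuous_intros) (auto dest!: rpos)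
  have contc2: "continuous_on S c2" unfolding c2_def
    using contr contth contF'1 contF' mu_pos by (intro continuous_intros) (auto dest!: rpos)
  have contD: "continuous_on S D" unfolding D_def by (intro continuous_on_mk2 contc1 contc2)
  have det: "det2 (c1 x) (c2 x) \<noteq> 0" if "x \<in> S" for x
  proof -
    have "det2 (c1 x) (c2 x) = r x * ((- F' x (1,0) / \<mu>) / (2 * r x) - (- F' x (0,1) / \<mu>) / (2 * r x))"
      unfolding c1_def c2_def det_alg by simp
    also have "\<dots> = (F' x (0,1) - F' x (1,0)) / (2 * \<mu>)"
      using rpos[OF that] mu_pos by (simp add: field_simps)
    finally have "det2 (c1 x) (c2 x) = (F' x (0,1) - F' x (1,0)) / (2 * \<mu>)" .
    then show ?thesis using mixed[OF that] mu_pos by simp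
  qed
  have sqpol: "(a * cos t)^2 + (a * sin t)^2 = a^2" for a t :: real
    by (simp add: power_mult_distrib flip: distrib_left)
  have C1: "C1_on S (Tmap \<mu> psib)"
    unfolding C1_on_def using derT contD by blast
  have der': "\<And>x. x \<in> {0<..} \<times> UNIV \<Longrightarrow> (F has_derivative blinfun_apply (F' x)) (at x)"
    using F'der unfolding S_def .
  have mixed': "\<And>x. x \<in> {0<..} \<times> UNIV \<Longrightarrow> F' x (1,0) - F' x (0,1) > 0"
    using mixed unfolding S_def .
  have injB: "Tmap \<mu> psib x = Tmap \<mu> psib y \<longleftrightarrow>
            fst x = fst y \<and> (\<exists>k::int. snd x - snd y = 2 * pi * of_int k)"
    if xS: "x \<in> S" and yS: "y \<in> S" for x y
  proof
    assume eq: "Tmap \<mu> psib x = Tmap \<mu> psib y"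
    have e1: "r x * cos (th x) = r y * cos (th y)" and e2: "r x * sin (th x) = r y * sin (th y)"
      using eq Teq[OF xS] Teq[OF yS] by auto
    have "(r x)^2 = (r y)^2" using sqpol[of "r x" "th x"] sqpol[of "r y" "th y"] e1 e2 by simp
    then have req: "r x = r y" using rpos[OF xS] rpos[OF yS] by (simp add: power2_eq_iff_nonneg)
    have "sin (th x) = sin (th y) \<and> cos (th x) = cos (th y)"
      using e1 e2 req rpos[OF yS] by auto
    then obtain n :: int where n: "th x = th y + 2 * pi * n"
      using sin_cos_eq_iff[of "th x" "th y"] by blast
    have "- F x / \<mu> = - F y / \<mu>" using req unfolding r_def by simp
    then have Fxy: "F x = F y" using mu_pos by (simp add: divide_simps)
    have fy0: "fst y > 0" using yS inS by blast
    have fx0: "fst x > 0" using xS inS by blast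
    define th0 where "th0 = fst x + snd x"
    have A: "F (fst x, th0 - fst x) = F x" by (simp add: th0_def F_def)
    have B: "F (fst y, th0 - fst y) = F y"
    proof -
      have "th0 - fst y = snd y + 2 * pi * of_int n" using n by (simp add: th0_def th_def)
      then show ?thesis using per[OF fy0, of "snd y" n] by (simp add: F_def)
    qed
    have "fst x = fst y"
    proof (rule linorder_cases[of "fst x" "fst y"])
      assume "fst x < fst y"
      then have "F (fst x, th0 - fst x) < F (fst y, th0 - fst y)"
        using line_mono[OF der' mixed' fx0, where th=th0] by blast
      then show ?thesis using A B Fxy by simp
    next
      assume "fst y < fst x"
      then have "F (fst y, th0 - fst y) < F (fst x, th0 - fst x)"
        using line_mono[OF der' mixed' fy0, where th=th0] by blast
      then show ?thesis using A B Fxy by simp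
    qed
    moreover have "snd x - snd y = 2 * pi * of_int n" using n calculation by (simp add: th_def)
    ultimately show "fst x = fst y \<and> (\<exists>k::int. snd x - snd y = 2 * pi * of_int k)" by blast
  next
    assume "fst x = fst y \<and> (\<exists>k::int. snd x - snd y = 2 * pi * of_int k)"
    then obtain k :: int where f: "fst x = fst y" and k0: "snd x - snd y = 2 * pi * of_int k"
      by blast
    have k: "snd x = snd y + 2 * pi * of_int k" using k0 by linarith
    have fy0: "fst y > 0" using yS inS by blast
    have "F x = F y" using per[OF fy0, of "snd y" k] f k by (simp add: F_def)
    then have "r x = r y" by (simp add: r_def)
    moreover have "th x = th y + 2 * pi * of_int k" using f k by (simp add: th_def)
    then have "sin (th x) = sin (th y) \<and> cos (th x) = cos (th y)"
      using sin_cos_eq_iff[of "th x" "th y"] by blast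
    then have "cos (th x) = cos (th y)" "sin (th x) = sin (th y)" by auto
    ultimately show "Tmap \<mu> psib x = Tmap \<mu> psib y" using Teq[OF xS] Teq[OF yS] by simp
  qed
  have nz: "Tmap \<mu> psib x \<noteq> 0" if xS: "x \<in> S" for x
  proof
    assume "Tmap \<mu> psib x = 0"
    then have "r x * cos (th x) = 0" "r x * sin (th x) = 0" using Teq[OF xS] by (auto simp: zero_prod_def)
    then have "cos (th x) = 0" "sin (th x) = 0" using rpos[OF xS] by auto
    then show False using sin_cos_squared_add[of "th x"] by simp
  qed
  have surj: "\<exists>x\<in>S. Tmap \<mu> psib x = z" if "z \<noteq> 0" for z
  proof -
    obtain u v where z: "z = (u, v)" by (cases z)
    have "u \<noteq> 0 \<or> v \<noteq> 0" using that z by (auto simp: zero_prod_def)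
    then have uv: "u^2 + v^2 > 0" using sum_power2_gt_zero_iff by blast
    define \<rho> where "\<rho> = sqrt (u^2 + v^2)"
    have rho: "\<rho> > 0" using uv by (simp add: \<rho>_def)
    have r2: "\<rho>^2 = u^2 + v^2" using uv by (simp add: \<rho>_def)
    have "(u/\<rho>)^2 + (v/\<rho>)^2 = (u^2 + v^2) / \<rho>^2" by (simp add: power_divide add_divide_distrib)
    moreover have "u^2 + v^2 \<noteq> 0" using uv by linarith
    ultimately have "(u/\<rho>)^2 + (v/\<rho>)^2 = 1" using r2 by (metis divide_self)
    then obtain \<theta> where th1: "u/\<rho> = cos \<theta>" and th2: "v/\<rho> = sin \<theta>" by (rule sincos_total_2pi) auto
    define \<phi> where "\<phi> = (\<lambda>t. F (t, \<theta> - t))"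
    define c where "c = \<mu> * \<rho>^2"
    have cpos: "c > 0" using mu_pos rho by (simp add: c_def)
    define t1 where "t1 = (c / m) powr (-1/(2*\<mu>))"
    define t2 where "t2 = (c / M) powr (-1/(2*\<mu>))"
    have cm: "c / m > 0" "c / M > 0" using cpos mM by auto
    have t1p: "t1 > 0" and t2p: "t2 > 0" using cm by (auto simp: t1_def t2_def)
    have a0: "-1/(2*\<mu>) \<le> 0" using mu_pos by simp
    have "c / M \<le> c / m" using cpos mM by (simp add: divide_left_mono)
    then have t12: "t1 \<le> t2" unfolding t1_def t2_def
      by (rule powr_mono2'[OF a0 cm(2)])
    have pw: "((d::real) powr (-1/(2*\<mu>))) powr (- 2 * \<mu>) = d" if "d > 0" for d
      using that mu_pos by (simp add: powr_powr)
    have "\<phi> t1 \<le> - m * t1 powr (- 2 * \<mu>)" using bounds[OF t1p] by (simp add: \<phi>_def F_def)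
    also have "\<dots> = - c" using pw[OF cm(1)] mM by (simp add: t1_def)
    finally have p1: "\<phi> t1 \<le> - c" .
    have "- c = - M * t2 powr (- 2 * \<mu>)" using pw[OF cm(2)] mM by (simp add: t2_def)
    also have "\<dots> \<le> \<phi> t2" using bounds[OF t2p] by (simp add: \<phi>_def F_def)
    finally have p2: "- c \<le> \<phi> t2" .
    have "continuous_on {t1..t2} \<phi>"
    proof (rule continuous_at_imp_continuous_on, rule ballI)
      fix t assume "t \<in> {t1..t2}"
      then have t0: "t > 0" using t1p by auto
      have "isCont F (t, \<theta> - t)"
        using has_derivative_continuous[OF F'der] t0 inS by simp
      then have "isCont (F \<circ> (\<lambda>t. (t, \<theta> - t))) t"
        by (intro continuous_at_compose) (auto intro!: continuous_intros)
      then show "isCont \<phi> t" by (simp add: \<phi>_def o_def)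
    qed
    then obtain t where t: "t1 \<le> t" "t \<le> t2" "\<phi> t = - c" using IVT'[OF p1 p2 t12] by blast
    define x where "x = (t, \<theta> - t)"
    have xS: "x \<in> S" using t t1p by (simp add: x_def inS)
    have "r x = \<rho>" using t mu_pos rho by (simp add: r_def x_def \<phi>_def c_def)
    moreover have "th x = \<theta>" by (simp add: th_def x_def)
    ultimately have "Tmap \<mu> psib x = (\<rho> * cos \<theta>, \<rho> * sin \<theta>)" using Teq[OF xS] by simp
    also have "\<dots> = z"
    proof -
      have "\<rho> * cos \<theta> = u" using th1 rho by (simp add: divide_eq_eq)
      moreover have "\<rho> * sin \<theta> = v" using th2 rho by (simp add: divide_eq_eq)
      ultimately show ?thesis using z by simp
    qed
    finally show ?thesis using xS by blast
  qed
  have img: "Tmap \<mu> psib ` S = UNIV - {0}"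
  proof (intro equalityI subsetI)
    fix w :: "real \<times> real" assume "w \<in> Tmap \<mu> psib ` S"
    then show "w \<in> UNIV - {0}" using nz by auto
  next
    fix w :: "real \<times> real" assume "w \<in> UNIV - {0}"
    then obtain x where "x \<in> S" "Tmap \<mu> psib x = w" using surj[of w] by blast
    then show "w \<in> Tmap \<mu> psib ` S" by blast
  qed
  have loc: "\<exists>U g. open U \<and> z \<in> U \<and> 0 \<notin> U \<and> C1_on U g
          \<and> g ` U \<subseteq> S \<and> (\<forall>w\<in>U. Tmap \<mu> psib (g w) = w)" if z0: "z \<noteq> 0" for z
  proof -
    obtain x0 where x0S: "x0 \<in> S" and x0: "Tmap \<mu> psib x0 = z" using surj[OF z0] by blast
    have invf: "inv2 (c1 x0) (c2 x0) o\<^sub>L D x0 = id_blinfun"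
      unfolding D_def by (rule inv2_left[OF det[OF x0S]])
    obtain U' V g g' where "open U'" "U' \<subseteq> S" "x0 \<in> U'" "open V" "Tmap \<mu> psib x0 \<in> V"
      and hom: "homeomorphism U' V (Tmap \<mu> psib) g"
      and gder: "\<And>y. y \<in> V \<Longrightarrow> (g has_derivative g' y) (at y)"
      and g'eq: "\<And>y. y \<in> V \<Longrightarrow> g' y = inv (blinfun_apply (D (g y)))"
      and "\<And>y. y \<in> V \<Longrightarrow> bij (blinfun_apply (D (g y)))"
      by (rule inverse_function_theorem[OF openS derT contD x0S invf]) blast+
    have gV: "g ` V = U'" and fg: "\<And>w. w \<in> V \<Longrightarrow> Tmap \<mu> psib (g w) = w"
      and fU: "Tmap \<mu> psib ` U' = V" and contg: "continuous_on V g"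
      using hom by (auto simp: homeomorphism_def)
    have gS: "g ` V \<subseteq> S" using gV \<open>U' \<subseteq> S\<close> by simp
    have "0 \<notin> V" using fU nz \<open>U' \<subseteq> S\<close> by auto
    moreover have "C1_on V g"
      unfolding C1_on_def
    proof (intro exI conjI ballI)
      fix y assume yV: "y \<in> V"
      have "g y \<in> S" using gS yV by blast
      then have "g' y = blinfun_apply (inv2 (c1 (g y)) (c2 (g y)))"
        using g'eq[OF yV] inv_mk2[OF det] by (simp add: D_def)
      then show "(g has_derivative blinfun_apply (inv2 (c1 (g y)) (c2 (g y)))) (at y)"
        using gder[OF yV] by simp
    next
      show "continuous_on V (\<lambda>y. inv2 (c1 (g y)) (c2 (g y)))"
        using gS by (intro continuous_on_inv2 continuous_on_compose2[OF contc1 contg]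
            continuous_on_compose2[OF contc2 contg] det) auto
    qed
    ultimately show ?thesis
      apply (intro exI[of _ V] exI[of _ g] conjI)
      using \<open>open V\<close> x0 \<open>Tmap \<mu> psib x0 \<in> V\<close> gS fg by auto
  qed
  have SS: "{0<..} \<times> UNIV = S" by (simp add: S_def)
  show ?thesis
    unfolding SS
  proof (intro conjI)
    show "C1_on S (Tmap \<mu> psib)" by (fact C1)
    show "Tmap \<mu> psib ` S = UNIV - {0}" by (fact img)
    show "\<forall>x\<in>S. \<forall>y\<in>S. (Tmap \<mu> psib x = Tmap \<mu> psib y) =
      (fst x = fst y \<and> (\<exists>k::int. snd x - snd y = 2 * pi * of_int k))"
    proof (intro ballI)
      fix x y assume "x \<in> S" "y \<in> S"
      then show "(Tmap \<mu> psib x = Tmap \<mu> psib y) =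
        (fst x = fst y \<and> (\<exists>k::int. snd x - snd y = 2 * pi * of_int k))" by (rule injB)
    qed
    show "\<forall>z. z \<noteq> 0 \<longrightarrow> (\<exists>U g. open U \<and> z \<in> U \<and> 0 \<notin> U \<and> C1_on U g \<and> g ` U \<subseteq> S \<and> (\<forall>w\<in>U. Tmap \<mu> psib (g w) = w))"
    proof (intro allI impI)
      fix z :: "real \<times> real" assume "z \<noteq> 0"
      then show "\<exists>U g. open U \<and> z \<in> U \<and> 0 \<notin> U \<and> C1_on U g \<and> g ` U \<subseteq> S \<and> (\<forall>w\<in>U. Tmap \<mu> psib (g w) = w)"
        by (rule loc)
    qed
  qed
qed
end
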